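(* Let $\psi$ and $\varphi$ be entire functions on $\mathbb{C}$ with $\varphi(z)=az+b$, where $a,b\in\mathbb{C}$ and $|a|<1$, and suppose that the weighted composition operator $C_{\psi,\varphi}$ is bounded on $\mathcal{F}^2$. If $\lambda$ is an eigenvalue of $C_{\psi,\varphi}$, then $|\lambda|\le \left|\psi\!\left(\frac{b}{1-a}\right)\right|$. Moreover, if $\psi\!\left(\frac{b}{1-a}\right)=0$ and $\varphi$ and $\psi$ are both nonconstant, then $C_{\psi,\varphi}$ has no eigenvalues.
   Context: $\mathcal{F}^2$ is the Fock space: the Hilbert space of entire functions $f$ on $\mathbb{C}$ with $\int_{\mathbb{C}}|f(z)|^2\,d\mu(z)<\infty$, where $d\mu(z)=\pi^{-1}e^{-|z|^2}\,dA(z)$ and $dA$ is Lebesgue area measure, with inner product $\langle f,g\rangle=\int_{\mathbb{C}} f\overline{g}\,d\mu$. For an entire function $\psi$ and an entire function $\varphi$, the weighted composition operator is $C_{\psi,\varphi}f=\psi\cdot(f\circ\varphi)$. *)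

theory Defs
  imports "HOL-Analysis.Analysis"
begin

definition fock_weight :: "complex \<Rightarrow> real" where
  "fock_weight z = exp (- (cmod z)\<^sup>2) / pi"

text \<open>The Fock space F^2: entire functions square-integrable w.r.t. mu
  (dA = Lebesgue measure lborel on complex = R^2).\<close>
definition fock_space :: "(complex \<Rightarrow> complex) set" where
  "fock_space = {f. f holomorphic_on UNIV \<and>
     integrable lborel (\<lambda>z. (cmod (f z))\<^sup>2 * fock_weight z)}"

definition fock_norm :: "(complex \<Rightarrow> complex) \<Rightarrow> real" where
  "fock_norm f = sqrt (\<integral>z. (cmod (f z))\<^sup>2 * fock_weight z \<partial>lborel)"

definition wcomp :: "(complex \<Rightarrow> complex) \<Rightarrow> (complex \<Rightarrow> complex) \<Rightarrow>
    (complex \<Rightarrow> complex) \<Rightarrow> (complex \<Rightarrow> complex)" where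
  "wcomp psi phi f = (\<lambda>z. psi z * f (phi z))"

definition bounded_on_fock :: "((complex \<Rightarrow> complex) \<Rightarrow> (complex \<Rightarrow> complex)) \<Rightarrow> bool" where
  "bounded_on_fock T \<longleftrightarrow> (\<forall>f\<in>fock_space. T f \<in> fock_space) \<and>
     (\<exists>M. \<forall>f\<in>fock_space. fock_norm (T f) \<le> M * fock_norm f)"

definition fock_eigenvalue :: "((complex \<Rightarrow> complex) \<Rightarrow> (complex \<Rightarrow> complex)) \<Rightarrow> complex \<Rightarrow> bool" where
  "fock_eigenvalue T lam \<longleftrightarrow>
     (\<exists>f\<in>fock_space. f \<noteq> (\<lambda>z. 0) \<and> T f = (\<lambda>z. lam * f z))"

end

theory Submission
  imports Defs "HOL-Complex_Analysis.Complex_Analysis"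
begin

lemma eig_form:
  fixes psi f :: "complex \<Rightarrow> complex" and a b lam :: complex
  assumes holpsi: "psi holomorphic_on UNIV" and holf: "f holomorphic_on UNIV"
    and fnz: "f \<noteq> (\<lambda>z. 0)" and a1: "cmod a < 1"
    and eq: "\<And>z. psi z * f (a * z + b) = lam * f z"
  shows "\<exists>n. lam = psi (b / (1 - a)) * a ^ n"
proof -
  define z0 where "z0 = b / (1 - a)"
  have a1': "1 - a \<noteq> 0" using a1 by auto
  have fix0: "a * z0 + b = z0" unfolding z0_def using a1' by (simp add: field_simps)
  show ?thesis
  proof (cases "f z0 = 0")
    case False
    have "psi z0 * f z0 = lam * f z0" using eq[of z0] fix0 by simp
    then have "lam = psi z0 * a ^ 0" using False by simp
    then show ?thesis unfolding z0_def by blast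
  next
    case True
    have nc: "\<not> f constant_on UNIV"
    proof
      assume "f constant_on UNIV"
      then obtain c where "\<And>x. f x = c" unfolding constant_on_def by auto
      then have "f = (\<lambda>z. 0)" using True by auto
      then show False using fnz by simp
    qed
    obtain g r n where n: "0 < n" and r: "0 < r" and hg: "g holomorphic_on ball z0 r"
      and fg: "\<And>w. w \<in> ball z0 r \<Longrightarrow> f w = (w - z0)^n * g w"
      and gnz: "\<And>w. w \<in> ball z0 r \<Longrightarrow> g w \<noteq> 0"
      using holomorphic_factor_zero_nonconstant[OF holf open_UNIV connected_UNIV UNIV_I True nc] by metis
    have inball: "a * w + b \<in> ball z0 r" if "w \<in> ball z0 r" for w
    proof -
      have "a * w + b - z0 = a * (w - z0)" using fix0 by (simp add: algebra_simps)
      then have "dist z0 (a * w + b) = cmod (a * (w - z0))"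
        by (metis dist_commute dist_norm)
      also have "\<dots> = cmod a * dist z0 w" by (simp add: norm_mult dist_norm norm_minus_commute)
      finally have "dist z0 (a * w + b) = cmod a * dist z0 w" .
      also have "\<dots> \<le> dist z0 w" using a1 by (simp add: mult_left_le_one_le)
      finally show ?thesis using that by simp
    qed
    define h where "h w = psi w * a ^ n * g (a * w + b) - lam * g w" for w
    have contg: "continuous_on (ball z0 r) g" using hg holomorphic_on_imp_continuous_on by blast
    have contpsi: "continuous_on UNIV psi" using holpsi holomorphic_on_imp_continuous_on by blast
    have "continuous_on (ball z0 r) (\<lambda>w. g (a * w + b))"
      by (rule continuous_on_compose2[OF contg]) (auto intro!: continuous_intros inball)
    then have conth: "continuous_on (ball z0 r) h" unfolding h_def
      by (auto intro!: continuous_intros contg continuous_on_subset[OF contpsi])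
    have "isCont h z0" using conth r continuous_on_eq_continuous_at by (metis open_ball centre_in_ball)
    then have t1: "(h \<longlongrightarrow> h z0) (at z0)" by (simp add: isCont_def)
    have ev: "eventually (\<lambda>w. h w = 0) (at z0)"
    proof -
      have "eventually (\<lambda>w. w \<in> ball z0 r) (at z0)"
        using r by (intro eventually_at_in_open') auto
      moreover have "h w = 0" if "w \<in> ball z0 r" "w \<noteq> z0" for w
      proof -
        have e: "a * w + b - z0 = a * (w - z0)" using fix0 by (simp add: algebra_simps)
        have "psi w * ((a * w + b - z0)^n * g (a * w + b)) = lam * ((w - z0)^n * g w)"
          using eq[of w] fg[OF that(1)] fg[OF inball[OF that(1)]] by simp
        then have q: "psi w * ((a * (w - z0))^n * g (a * w + b)) = lam * ((w - z0)^n * g w)"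
          unfolding e .
        have lhs: "psi w * ((a * (w - z0))^n * g (a*w+b)) = (w - z0)^n * (psi w * a ^ n * g (a*w+b))"
          by (simp add: power_mult_distrib mult_ac)
        have rhs: "lam * ((w - z0)^n * g w) = (w - z0)^n * (lam * g w)" by (simp add: mult_ac)
        have nz: "(w - z0)^n \<noteq> 0" using that(2) by simp
        have "psi w * a ^ n * g (a*w+b) = lam * g w"
          using q lhs rhs nz mult_left_cancel by metis
        then show ?thesis unfolding h_def by simp
      qed
      ultimately show ?thesis unfolding eventually_at_filter
        by (auto elim: eventually_mono)
    qed
    have t2: "(h \<longlongrightarrow> 0) (at z0)" using ev tendsto_eventually by blast
    have "h z0 = 0" using tendsto_unique[OF at_neq_bot t1 t2] .
    then have "psi z0 * a ^ n * g z0 = lam * g z0" unfolding h_def fix0 by simp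
    then have "lam = psi z0 * a ^ n" using gnz[of z0] r by (simp add: field_simps)
    then show ?thesis unfolding z0_def by blast
  qed
qed

theorem proposition2p1:
  fixes psi phi :: "complex \<Rightarrow> complex" and a b :: complex
  assumes "psi holomorphic_on UNIV"
    and "phi = (\<lambda>z. a * z + b)"
    and "cmod a < 1"
    and "bounded_on_fock (wcomp psi phi)"
  shows "(\<forall>lam. fock_eigenvalue (wcomp psi phi) lam \<longrightarrow> cmod lam \<le> cmod (psi (b / (1 - a)))) \<and>
         (psi (b / (1 - a)) = 0 \<and> \<not> (\<exists>c. \<forall>z. phi z = c) \<and> \<not> (\<exists>c. \<forall>z. psi z = c)
           \<longrightarrow> (\<forall>lam. \<not> fock_eigenvalue (wcomp psi phi) lam))"
proof -
  have P1: "\<exists>n. lam = psi (b / (1 - a)) * a ^ n \<and> (\<exists>f. f holomorphic_on UNIV \<and> f \<noteq> (\<lambda>z. 0)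
     \<and> (\<forall>z. psi z * f (a * z + b) = lam * f z))"
    if EV: "fock_eigenvalue (wcomp psi phi) lam" for lam
  proof -
    obtain f where f: "f \<in> fock_space" "f \<noteq> (\<lambda>z. 0)" "wcomp psi phi f = (\<lambda>z. lam * f z)"
      using EV unfolding fock_eigenvalue_def by blast
    have hf: "f holomorphic_on UNIV" using f(1) unfolding fock_space_def by simp
    have eq: "psi z * f (a * z + b) = lam * f z" for z
      using fun_cong[OF f(3), of z] assms(2) unfolding wcomp_def by simp
    show ?thesis using eig_form[OF assms(1) hf f(2) assms(3) eq] hf f(2) eq by blast
  qed
  have B: "cmod lam \<le> cmod (psi (b / (1 - a)))" if EV2: "fock_eigenvalue (wcomp psi phi) lam" for lam
  proof -
    obtain n where "lam = psi (b / (1 - a)) * a ^ n" using P1[OF EV2] by blast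
    then have "cmod lam = cmod (psi (b / (1 - a))) * cmod a ^ n" by (simp add: norm_mult norm_power)
    also have "\<dots> \<le> cmod (psi (b / (1 - a))) * 1"
      using assms(3) by (intro mult_left_mono power_le_one) auto
    finally show ?thesis by simp
  qed
  moreover have "\<not> fock_eigenvalue (wcomp psi phi) lam"
    if H: "psi (b / (1 - a)) = 0" "\<not> (\<exists>c. \<forall>z. phi z = c)" "\<not> (\<exists>c. \<forall>z. psi z = c)" for lam
  proof
    assume E: "fock_eigenvalue (wcomp psi phi) lam"
    obtain n f where l: "lam = psi (b / (1 - a)) * a ^ n" and hf: "f holomorphic_on UNIV"
      and fnz: "f \<noteq> (\<lambda>z. 0)" and eq: "\<And>z. psi z * f (a * z + b) = lam * f z"
      using P1[OF E] by blast
    have l0: "lam = 0" using l H(1) by simp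
    have a0: "a \<noteq> 0" using H(2) assms(2) by auto
    have hc: "(\<lambda>z. f (a * z + b)) holomorphic_on UNIV"
      by (rule holomorphic_on_compose_gen[OF _ hf, unfolded o_def]) (auto intro!: holomorphic_intros)
    have zero: "f (a * w + b) = 0" for w
    proof (rule ccontr)
      assume nz: "f (a * w + b) \<noteq> 0"
      have "continuous_on UNIV (\<lambda>z. f (a * z + b))" using hc holomorphic_on_imp_continuous_on by blast
      then have "open {z. f (a * z + b) \<noteq> (\<lambda>_. 0) z}"
        by (intro open_Collect_neq) (auto intro: continuous_on_const)
      then obtain S where S: "open S" "w \<in> S" "\<And>z. z \<in> S \<Longrightarrow> f (a * z + b) \<noteq> 0"
        using nz by (intro that[of "{z. f (a * z + b) \<noteq> 0}"]) auto
      have "psi z = 0" for z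
      proof (rule analytic_continuation_open[where f = psi and g = "\<lambda>_. 0" and s = S and s' = UNIV])
        show "psi x = 0" if "x \<in> S" for x using eq[of x] l0 S(3)[OF that] by simp
      qed (use S assms(1) in auto)
      then show False using H(3) by auto
    qed
    have "f y = 0" for y using zero[of "(y - b) / a"] a0 by (simp add: field_simps)
    then show False using fnz by auto
  qed
  ultimately show ?thesis by blast
qed

end
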